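(* Let $(M,\rho)$ be a metric space, let $f,g:M\to\mathbb{R}\cup\{+\infty\}$, and let $\lambda\in\mathbb{R}$ be such that $L_\lambda(f-g)\cap\operatorname{dom} f\cap\operatorname{dom} g\neq\varnothing$. Let $M_1:=L_\lambda(f-g)$ and $f_1:=f|_{M_1}$, regarded as a function on the metric space $(M_1,\rho)$. If $x\in M_1\cap\operatorname{dom} g$ satisfies $|\nabla f|(x)>|\nabla g|(x)$, then $|\nabla f_1|(x)=|\nabla f|(x)$.
   Context: Functions take values in $\mathbb{R}\cup\{+\infty\}$; $\operatorname{dom} f:=\{x:f(x)<+\infty\}$; the expression $\infty-\infty$ is undefined. For $\lambda\in\mathbb{R}$, $L_\lambda(f-g):=\{x\in\operatorname{dom} f:\ f(x)-g(x)\le\lambda\}$ (where $f(x)-g(x)=-\infty$ if $g(x)=+\infty$). $[t]^+:=\max\{0,t\}$, with $[f(x)-f(y)]^+:=0$ if $f(y)=+\infty$. For $x\in\operatorname{dom} f$, the local slope is $|\nabla f|(x):=\limsup_{y\to x,\,y\neq x}\frac{[f(x)-f(y)]^+}{\rho(x,y)}\in[0,+\infty]$ (equal to $0$ at isolated points); for a restriction to a subset, the slope is computed in the subspace metric, i.e. with $y$ ranging over the subset. *)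

theory Defs
  imports "HOL-Analysis.Analysis" "HOL-Library.Extended_Real"
begin

text \<open>Functions take values in ereal; the value -\<infinity> is excluded by explicit hypotheses.\<close>

definition edom :: "('a \<Rightarrow> ereal) \<Rightarrow> 'a set" where
  "edom f = {x. f x < \<infinity>}"

text \<open>Sublevel set L_lambda(f-g) = {x in dom f. f x - g x <= lambda}, with f x - g x = -infinity if g x = infinity.\<close>
definition sublevel :: "('a \<Rightarrow> ereal) \<Rightarrow> ('a \<Rightarrow> ereal) \<Rightarrow> real \<Rightarrow> 'a set" where
  "sublevel f g lam = {x \<in> edom f. g x = \<infinity> \<or> f x - g x \<le> ereal lam}"

definition posdiff :: "ereal \<Rightarrow> ereal \<Rightarrow> ereal" where
  "posdiff a b = (if b = \<infinity> then 0 else max 0 (a - b))"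

definition slope :: "'a::metric_space set \<Rightarrow> ('a \<Rightarrow> ereal) \<Rightarrow> 'a \<Rightarrow> ereal" where
  "slope S f x = (if trivial_limit (at x within S) then 0
     else Limsup (at x within S) (\<lambda>y. posdiff (f x) (f y) / ereal (dist x y)))"

end

theory Submission
  imports Defs
begin

lemma maxe: "posdiff (ereal u) (ereal v) = ereal (max 0 (u - v))"
  by (auto simp: posdiff_def max_def)

lemma memlem:
  fixes f g :: "'a::metric_space \<Rightarrow> ereal"
  assumes nf: "\<forall>y. f y \<noteq> -\<infinity>" and ng: "\<forall>y. g y \<noteq> -\<infinity>"
    and x: "x \<in> sublevel f g lam" and gx: "x \<in> edom g" and yx: "y \<noteq> x"
    and c: "0 < c" "c' < c"
    and qf: "ereal c < posdiff (f x) (f y) / ereal (dist x y)"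
    and qg: "posdiff (g x) (g y) / ereal (dist x y) < ereal c'"
  shows "y \<in> sublevel f g lam"
proof -
  have d: "dist x y > 0" using yx by simp
  obtain a where a: "f x = ereal a" using x nf unfolding sublevel_def edom_def
    by (cases "f x") auto
  obtain b where b: "g x = ereal b" using gx ng unfolding edom_def by (cases "g x") auto
  have lam: "a - b \<le> lam" using x a b unfolding sublevel_def by auto
  have fy: "f y \<noteq> \<infinity>"
  proof
    assume "f y = \<infinity>" then show False using qf c by (simp add: posdiff_def)
  qed
  then obtain a' where a': "f y = ereal a'" using nf by (cases "f y") auto
  have "c < max 0 (a - a') / dist x y" using qf a a' d by (simp add: maxe del: ereal_max)
  hence "c * dist x y < max 0 (a - a')" using d by (simp add: field_simps)
  hence h1: "c * dist x y < a - a'" using c d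
    by (smt (verit, ccfv_SIG) mult_pos_pos)
  show ?thesis
  proof (cases "g y = \<infinity>")
    case True then show ?thesis using a' unfolding sublevel_def edom_def by auto
  next
    case False
    then obtain b' where b': "g y = ereal b'" using ng by (cases "g y") auto
    have "max 0 (b - b') / dist x y < c'" using qg b b' d by (simp add: maxe del: ereal_max)
    hence "max 0 (b - b') < c' * dist x y" using d by (simp add: field_simps)
    hence h2: "b - b' < c' * dist x y" by linarith
    have "c' * dist x y \<le> c * dist x y" using c d by simp
    hence "a' - b' \<le> lam" using h1 h2 lam by linarith
    then show ?thesis using a' b' unfolding sublevel_def edom_def by auto
  qed
qed

lemma Qnonneg: "0 \<le> posdiff a b / ereal (dist x y)"
  unfolding posdiff_def by (auto intro!: zero_le_divide_ereal)

theorem lemma2p4: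
  fixes f g :: "'a::metric_space \<Rightarrow> ereal" and lam :: real and x :: 'a
  assumes "\<forall>y. f y \<noteq> -\<infinity>" and "\<forall>y. g y \<noteq> -\<infinity>"
    and "sublevel f g lam \<inter> edom f \<inter> edom g \<noteq> {}"
    and "x \<in> sublevel f g lam" and "x \<in> edom g"
    and "slope UNIV f x > slope UNIV g x"
  shows "slope (sublevel f g lam) f x = slope UNIV f x"
proof -
  define M1 where "M1 = sublevel f g lam"
  define Qf where "Qf = (\<lambda>y. posdiff (f x) (f y) / ereal (dist x y))"
  define Qg where "Qg = (\<lambda>y. posdiff (g x) (g y) / ereal (dist x y))"
  define sF where "sF = slope UNIV f x"
  define sG where "sG = slope UNIV g x"
  have lt: "sG < sF" using assms(6) sF_def sG_def by simp
  have nb: "at x \<noteq> bot"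
  proof
    assume "at x = bot"
    then have "sF = 0" "sG = 0" unfolding sF_def sG_def slope_def by auto
    then show False using lt by simp
  qed
  have sFe: "sF = Limsup (at x) Qf" using nb unfolding sF_def slope_def Qf_def by simp
  have sGe: "sG = Limsup (at x) Qg" using nb unfolding sG_def slope_def Qg_def by simp
  have sG0: "0 \<le> sG" unfolding sGe
    by (rule le_Limsup[OF nb]) (simp add: Qg_def Qnonneg)
  have K: "\<exists>\<^sub>F y in at x. y \<in> M1 \<and> ereal c < Qf y"
    if c0: "sG < ereal c" "ereal c < sF" for c
  proof -
    obtain c' where c': "sG < ereal c'" "ereal c' < ereal c" using ereal_dense2[OF c0(1)] by blast
    have "(0::ereal) < ereal c" using sG0 c0(1) by (rule le_less_trans)
    then have c00: "0 < c" by simp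
    have ev1: "eventually (\<lambda>y. Qg y < ereal c') (at x)"
      using c'(1) unfolding sGe Limsup_le_iff[symmetric] by (metis Limsup_le_iff order_refl)
    have fr: "\<exists>\<^sub>F y in at x. ereal c < Qf y"
    proof (rule ccontr)
      assume "\<not> (\<exists>\<^sub>F y in at x. ereal c < Qf y)"
      then have "eventually (\<lambda>y. Qf y \<le> ereal c) (at x)"
        by (simp add: not_frequently not_less)
      then have "sF \<le> ereal c" unfolding sFe by (rule Limsup_bounded)
      then show False using c0 by simp
    qed
    have ev2: "eventually (\<lambda>y. y \<noteq> x) (at x)" by (simp add: eventually_at_filter)
    have "\<exists>\<^sub>F y in at x. ereal c < Qf y \<and> (Qg y < ereal c' \<and> y \<noteq> x)"
      using frequently_eventually_conj[OF fr eventually_conj[OF ev1 ev2]] by (simp add: conj_commute)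
    then show ?thesis
    proof (rule frequently_mono[rotated], intro allI impI conjI)
      fix y assume h: "ereal c < Qf y \<and> Qg y < ereal c' \<and> y \<noteq> x"
      show "ereal c < Qf y" using h by simp
      show "y \<in> M1" unfolding M1_def
        by (rule memlem[OF assms(1,2,4,5), of y c c']) (use h c' c00 in \<open>auto simp: Qf_def Qg_def\<close>)
    qed
  qed
  obtain c0 where c0: "sG < ereal c0" "ereal c0 < sF" using ereal_dense2[OF lt] by blast
  have nb1: "at x within M1 \<noteq> bot"
  proof
    assume "at x within M1 = bot"
    then have "eventually (\<lambda>y. False) (at x within M1)" by simp
    then have "eventually (\<lambda>y. y \<in> M1 \<longrightarrow> \<not> ereal c0 < Qf y) (at x)"
      by (simp add: eventually_at_filter) (erule eventually_mono, auto)
    then show False using K[OF c0] by (simp add: frequently_def)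
  qed
  have L1: "slope M1 f x = Limsup (at x within M1) Qf" using nb1 unfolding slope_def Qf_def by simp
  have le: "Limsup (at x within M1) Qf \<le> sF"
    unfolding Limsup_le_iff
  proof (intro allI impI)
    fix y assume "sF < y"
    then have "eventually (\<lambda>z. Qf z < y) (at x)" unfolding sFe by (metis Limsup_le_iff order_refl)
    then show "eventually (\<lambda>z. y > Qf z) (at x within M1)"
      by (simp add: eventually_at_filter) (erule eventually_mono, auto)
  qed
  have ge: "sF \<le> Limsup (at x within M1) Qf"
  proof (rule ccontr)
    assume "\<not> sF \<le> Limsup (at x within M1) Qf"
    then have "max sG (Limsup (at x within M1) Qf) < sF" using lt by simp
    then obtain c where c: "max sG (Limsup (at x within M1) Qf) < ereal c" "ereal c < sF"
      using ereal_dense2 by blast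
    have "eventually (\<lambda>z. Qf z < ereal c) (at x within M1)"
      using c(1) by (metis Limsup_le_iff max.strict_boundedE order_refl)
    then have "eventually (\<lambda>z. z \<in> M1 \<longrightarrow> \<not> ereal c < Qf z) (at x)"
      by (simp add: eventually_at_filter) (erule eventually_mono, auto)
    then show False using K[of c] c by (simp add: frequently_def)
  qed
  show ?thesis using le ge L1 unfolding M1_def sF_def by simp
qed

end
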